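(* Let $l,t$ be non-negative integers and let $A_i,B_i\in\mathbb{C}$ for $i=-l,\dots,t$, with $A_0=1$, $B_0=0$. Consider the operator on $\mathcal{P}$ $$S_{l,t}=\prod_{i=-l}^{0}(A_iI+B_ixD)\,D\,\prod_{i=0}^{t}(A_iI+B_ixD).$$ Then there are constants $a_0,\dots,a_{l+t}\in\mathbb{C}$ such that $$S_{l,t}=\sum_{i=0}^{l+t}a_i(Dx)^iD.$$ Conversely, an operator $\Lambda=\sum_{i=0}^{k}a_i(Dx)^iD=\sum_{i=0}^{k}a_iD(xD)^i$ can be written in the form $$\Lambda=S_{0,k}=D\prod_{i=1}^{k}(A_iI+B_ixD),$$ where the coefficients $A_i,B_i$ are obtained from the factorization $\prod_{i=1}^{k}(A_i+B_ix)=\sum_{i=0}^{k}a_ix^i$ of the polynomial $f(x)=\sum_{i=0}^ka_ix^i$.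
   Context: $\mathcal{P}$ is the space of complex polynomials in $x$; $I$ is the identity operator, $D$ the derivative, $x$ multiplication by $x$, and products of operators are compositions. *)

theory Defs
  imports "HOL-Computational_Algebra.Polynomial"
begin

text \<open>Operators on the space of complex polynomials are functions
  complex poly => complex poly; products of operators are compositions.\<close>

definition Dop :: "complex poly \<Rightarrow> complex poly" where
  "Dop p = pderiv p"

definition Xop :: "complex poly \<Rightarrow> complex poly" where
  "Xop p = [:0, 1:] * p"

definition Iop :: "complex poly \<Rightarrow> complex poly" where
  "Iop p = p"

definition opprod :: "(int \<Rightarrow> ('a \<Rightarrow> 'a)) \<Rightarrow> int \<Rightarrow> int \<Rightarrow> ('a \<Rightarrow> 'a)" where
  "opprod F m n = foldr (\<circ>) (map F [m..n]) id"

definition factorop :: "(int \<Rightarrow> complex) \<Rightarrow> (int \<Rightarrow> complex) \<Rightarrow> int \<Rightarrow> complex poly \<Rightarrow> complex poly" where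
  "factorop A B i p = smult (A i) (Iop p) + smult (B i) (Xop (Dop p))"

definition Slt :: "nat \<Rightarrow> nat \<Rightarrow> (int \<Rightarrow> complex) \<Rightarrow> (int \<Rightarrow> complex) \<Rightarrow> complex poly \<Rightarrow> complex poly" where
  "Slt l t A B = opprod (factorop A B) (- int l) 0 \<circ> Dop \<circ> opprod (factorop A B) 0 (int t)"

end

theory Submission
  imports Defs "HOL-Computational_Algebra.Fundamental_Theorem_Algebra"
begin

lemma coeff_XD: "coeff (Xop (Dop p)) n = of_nat n * coeff p n"
  by (cases n) (auto simp: Xop_def Dop_def coeff_pderiv coeff_pCons_0 mult_pCons_left)

lemma coeff_D: "coeff (Dop p) n = (of_nat n + 1) * coeff p (Suc n)"
  by (simp add: Dop_def coeff_pderiv add.commute)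

lemma coeff_X: "coeff (Xop p) (Suc n) = coeff p n"
  by (simp add: Xop_def mult_pCons_left)

lemma coeff_factorop: "coeff (factorop A B i p) n = (A i + B i * of_nat n) * coeff p n"
  by (simp add: factorop_def Iop_def coeff_XD algebra_simps)

lemma coeff_fold: "coeff (foldr (\<circ>) (map (factorop A B) xs) id p) j
   = (\<Prod>i\<leftarrow>xs. A i + B i * of_nat j) * coeff p j"
  by (induction xs) (auto simp: coeff_factorop)

lemma coeff_opprod: "coeff (opprod (factorop A B) m n p) j
   = (\<Prod>i\<in>{m..n}. A i + B i * of_nat j) * coeff p j"
proof -
  have "(\<Prod>i\<in>{m..n}. A i + B i * of_nat j) = (\<Prod>i\<leftarrow>[m..n]. A i + B i * of_nat j)"
    using prod.distinct_set_conv_list[OF distinct_upto, of _ m n] by simp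
  then show ?thesis by (simp add: opprod_def coeff_fold)
qed

lemma coeff_DXpow: "coeff (((Dop \<circ> Xop) ^^ i) p) n = (of_nat n + 1) ^ i * coeff p n"
  by (induction i arbitrary: p) (auto simp: coeff_D coeff_X)

lemma coeff_XDpow: "coeff (((Xop \<circ> Dop) ^^ i) p) n = of_nat n ^ i * coeff p n"
  by (induction i arbitrary: p) (auto simp: coeff_XD)

lemma coeff_lhs: "coeff (\<Sum>i\<le>K. smult (a i) (((Dop \<circ> Xop) ^^ i \<circ> Dop) p)) n
  = poly (\<Sum>i\<le>K. monom (a i) i) (of_nat n + 1) * (of_nat n + 1) * coeff p (Suc n)"
  by (simp add: coeff_sum coeff_DXpow coeff_D poly_sum poly_monom sum_distrib_right, rule sum.cong, auto simp: algebra_simps)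

lemma coeff_rhs: "coeff (\<Sum>i\<le>K. smult (a i) ((Dop \<circ> (Xop \<circ> Dop) ^^ i) p)) n
  = poly (\<Sum>i\<le>K. monom (a i) i) (of_nat n + 1) * (of_nat n + 1) * coeff p (Suc n)"
  by (simp add: coeff_sum coeff_XDpow coeff_D poly_sum poly_monom sum_distrib_right, rule sum.cong, auto simp: algebra_simps)

lemma poly_expand:
  assumes "degree Q \<le> K"
  shows "(\<Sum>i\<le>K. monom (coeff Q i) i) = Q"
  using assms by (metis poly_as_sum_of_monoms')

lemma factor_exists:
  fixes f :: "complex poly"
  assumes "n \<ge> 1" "degree f \<le> n"
  shows "\<exists>A B :: int \<Rightarrow> complex. (\<Prod>i\<in>{1..int n}. [:A i, B i:]) = f"
  using assms
proof (induction n arbitrary: f rule: dec_induct)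
  case base
  have "f = [:coeff f 0, coeff f 1:]"
  proof (rule poly_eqI)
    fix i
    show "coeff f i = coeff [:coeff f 0, coeff f 1:] i"
    proof (cases i)
      case (Suc j)
      then show ?thesis using base by (cases j) (auto simp: coeff_eq_0)
    qed simp
  qed
  then show ?case by (intro exI[of _ "\<lambda>_. coeff f 0"] exI[of _ "\<lambda>_. coeff f 1"]) simp
next
  case (step m)
  have set: "{1..int (Suc m)} = insert (int m + 1) {1..int m}" by auto
  show ?case
  proof (cases "degree f \<le> m")
    case True
    then obtain A B where AB: "(\<Prod>i\<in>{1..int m}. [:A i, B i:]) = f" using step by blast
    let ?A = "A(int m + 1 := 1)" and ?B = "B(int m + 1 := 0)"
    have "(\<Prod>i\<in>{1..int m}. [:?A i, ?B i:]) = f" using AB by (intro trans[OF prod.cong AB]) auto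
    then have "(\<Prod>i\<in>{1..int (Suc m)}. [:?A i, ?B i:]) = f" unfolding set by simp
    then show ?thesis by blast
  next
    case False
    then have dg: "degree f = Suc m" using step by simp
    then have "\<not> constant (poly f)" by (simp add: constant_degree)
    then obtain z where "poly f z = 0" using fundamental_theorem_of_algebra by blast
    then obtain g where g: "f = [:-z,1:] * g" using poly_eq_0_iff_dvd by blast
    have "f \<noteq> 0" using dg by auto
    then have "g \<noteq> 0" using g by auto
    have "degree ([:-z,1:] * g) = 1 + degree g"
      by (subst degree_mult_eq) (use \<open>g \<noteq> 0\<close> in auto)
    then have "degree g = m" using dg g by simp
    then have "\<exists>A B. (\<Prod>i\<in>{1..int m}. [:A i, B i:]) = g" using step.IH[of g] by simp
    then obtain A B where AB: "(\<Prod>i\<in>{1..int m}. [:A i, B i:]) = g" by blast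
    let ?A = "A(int m + 1 := -z)" and ?B = "B(int m + 1 := 1)"
    have "(\<Prod>i\<in>{1..int m}. [:?A i, ?B i:]) = g" using AB by (intro trans[OF prod.cong AB]) auto
    then have "(\<Prod>i\<in>{1..int (Suc m)}. [:?A i, ?B i:]) = f" unfolding set using g by simp
    then show ?thesis by blast
  qed
qed

lemma deg_lin: "degree [:a, b:] \<le> 1"
  by (simp add: degree_pCons_le)

lemma deg_prod_lin:
  fixes f g :: "int \<Rightarrow> complex"
  shows "degree (\<Prod>i\<in>{m..n}. [:f i, g i:]) \<le> nat (n - m + 1)"
proof -
  have "degree (\<Prod>i\<in>{m..n}. [:f i, g i:]) \<le> (\<Sum>i\<in>{m..n}. degree [:f i, g i:])"
    using degree_prod_sum_le[of "{m..n}" "\<lambda>i. [:f i, g i:]"] by (simp add: o_def)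
  also have "\<dots> \<le> (\<Sum>i\<in>{m..n}. 1)" by (intro sum_mono deg_lin)
  finally show ?thesis by simp
qed

lemma poly_lin_shift: fixes a b :: complex shows "poly [:a - b, b:] (of_nat n + 1) = a + b * of_nat n"
  by (simp add: field_simps)

theorem proposition3:
  shows "(\<forall>(l::nat) (t::nat) (A::int \<Rightarrow> complex) (B::int \<Rightarrow> complex).
            A 0 = 1 \<and> B 0 = 0 \<longrightarrow>
            (\<exists>a::nat \<Rightarrow> complex.
               Slt l t A B = (\<lambda>p. \<Sum>i\<le>l+t. smult (a i) (((Dop \<circ> Xop) ^^ i \<circ> Dop) p))))
       \<and> (\<forall>(k::nat) (a::nat \<Rightarrow> complex). k \<ge> 1 \<longrightarrow>
            (\<lambda>p. \<Sum>i\<le>k. smult (a i) (((Dop \<circ> Xop) ^^ i \<circ> Dop) p))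
              = (\<lambda>p. \<Sum>i\<le>k. smult (a i) ((Dop \<circ> (Xop \<circ> Dop) ^^ i) p))
            \<and> (\<exists>(A::int \<Rightarrow> complex) (B::int \<Rightarrow> complex).
                 (\<Prod>i\<in>{1..int k}. [:A i, B i:]) = (\<Sum>i\<le>k. monom (a i) i))
            \<and> (\<forall>(A::int \<Rightarrow> complex) (B::int \<Rightarrow> complex).
                 (\<Prod>i\<in>{1..int k}. [:A i, B i:]) = (\<Sum>i\<le>k. monom (a i) i) \<longrightarrow>
                 (\<lambda>p. \<Sum>i\<le>k. smult (a i) (((Dop \<circ> Xop) ^^ i \<circ> Dop) p))
                   = Dop \<circ> opprod (factorop A B) 1 (int k)))"
proof (intro conjI allI impI)
  fix l t :: nat and A B :: "int \<Rightarrow> complex"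
  assume AB0: "A 0 = 1 \<and> B 0 = 0"
  define Q1 where "Q1 = (\<Prod>i\<in>{- int l..-1}. [:A i - B i, B i:])"
  define Q2 where "Q2 = (\<Prod>i\<in>{1..int t}. [:A i, B i:])"
  define Q where "Q = Q1 * Q2"
  have dQ1: "degree Q1 \<le> l" using deg_prod_lin[of "\<lambda>i. A i - B i" B "- int l" "-1"]
    unfolding Q1_def by simp
  have dQ2: "degree Q2 \<le> t" using deg_prod_lin[of A B 1 "int t"] unfolding Q2_def by simp
  have dQ: "degree Q \<le> l + t" unfolding Q_def
    using degree_mult_le[of Q1 Q2] dQ1 dQ2 by linarith
  have P1: "(\<Prod>i\<in>{- int l..0}. A i + B i * of_nat n) = poly Q1 (of_nat n + 1)" for n
  proof -
    have "(\<Prod>i\<in>{- int l..0}. A i + B i * of_nat n) = (\<Prod>i\<in>{- int l..0} - {0}. A i + B i * of_nat n)"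
      using prod.remove[of "{- int l..0}" 0 "\<lambda>i. A i + B i * of_nat n"] AB0 by simp
    also have "{- int l..0} - {0} = {- int l..-1}" by auto
    finally show ?thesis unfolding Q1_def poly_prod poly_lin_shift .
  qed
  have P2: "(\<Prod>i\<in>{0..int t}. A i + B i * of_nat m) = poly Q2 (of_nat m)" for m
  proof -
    have "(\<Prod>i\<in>{0..int t}. A i + B i * of_nat m) = (\<Prod>i\<in>{0..int t} - {0}. A i + B i * of_nat m)"
      using prod.remove[of "{0..int t}" 0 "\<lambda>i. A i + B i * of_nat m"] AB0 by simp
    also have "{0..int t} - {0} = {1..int t}" by auto
    finally show ?thesis unfolding Q2_def poly_prod by (simp add: mult.commute)
  qed
  show "\<exists>a::nat \<Rightarrow> complex.
               Slt l t A B = (\<lambda>p. \<Sum>i\<le>l+t. smult (a i) (((Dop \<circ> Xop) ^^ i \<circ> Dop) p))"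
  proof (intro exI[of _ "coeff Q"] ext poly_eqI)
    fix p n
    have "coeff (Slt l t A B p) n = poly Q1 (of_nat n + 1) * ((of_nat n + 1) * (poly Q2 (of_nat n + 1) * coeff p (Suc n)))"
      using P2[of "Suc n"] by (simp add: Slt_def coeff_opprod coeff_D P1 add.commute)
    also have "\<dots> = poly Q (of_nat n + 1) * (of_nat n + 1) * coeff p (Suc n)"
      by (simp add: Q_def)
    also have "\<dots> = coeff (\<Sum>i\<le>l+t. smult (coeff Q i) (((Dop \<circ> Xop) ^^ i \<circ> Dop) p)) n"
      by (simp only: coeff_lhs poly_expand[OF dQ])
    finally show "coeff (Slt l t A B p) n = coeff (\<Sum>i\<le>l+t. smult (coeff Q i) (((Dop \<circ> Xop) ^^ i \<circ> Dop) p)) n" .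
  qed
next
  fix k :: nat and a :: "nat \<Rightarrow> complex"
  assume k: "1 \<le> k"
  show "(\<lambda>p. \<Sum>i\<le>k. smult (a i) (((Dop \<circ> Xop) ^^ i \<circ> Dop) p))
              = (\<lambda>p. \<Sum>i\<le>k. smult (a i) ((Dop \<circ> (Xop \<circ> Dop) ^^ i) p))"
    by (intro ext poly_eqI) (simp only: coeff_lhs coeff_rhs)
  have "degree (\<Sum>i\<le>k. monom (a i) i) \<le> k"
    by (intro degree_sum_le) (auto simp: degree_monom_le intro: order.trans[OF degree_monom_le])
  then show "\<exists>(A::int \<Rightarrow> complex) (B::int \<Rightarrow> complex).
                 (\<Prod>i\<in>{1..int k}. [:A i, B i:]) = (\<Sum>i\<le>k. monom (a i) i)"
    using factor_exists k by blast
next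
  fix k :: nat and a :: "nat \<Rightarrow> complex" and A B :: "int \<Rightarrow> complex"
  assume eq: "(\<Prod>i\<in>{1..int k}. [:A i, B i:]) = (\<Sum>i\<le>k. monom (a i) i)"
  show "(\<lambda>p. \<Sum>i\<le>k. smult (a i) (((Dop \<circ> Xop) ^^ i \<circ> Dop) p))
                   = Dop \<circ> opprod (factorop A B) 1 (int k)"
  proof (intro ext poly_eqI)
    fix p n
    have "coeff (\<Sum>i\<le>k. smult (a i) (((Dop \<circ> Xop) ^^ i \<circ> Dop) p)) n
       = poly (\<Prod>i\<in>{1..int k}. [:A i, B i:]) (of_nat n + 1) * (of_nat n + 1) * coeff p (Suc n)"
      by (simp only: coeff_lhs eq)
    also have "\<dots> = coeff ((Dop \<circ> opprod (factorop A B) 1 (int k)) p) n"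
      by (simp add: coeff_D coeff_opprod poly_prod mult.commute add.commute)
    finally show "coeff (\<Sum>i\<le>k. smult (a i) (((Dop \<circ> Xop) ^^ i \<circ> Dop) p)) n
       = coeff ((Dop \<circ> opprod (factorop A B) 1 (int k)) p) n" .
  qed
qed

end
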